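(* Assume the chain $\{z_t\}$ described in the context is stationary with stationary distribution $\pi$. Let $N_0\ge1$ be an integer such that every entry of the $N_0$-step transition matrix $M^{(N_0)}$ of $\{z_t\}$ is positive. Let $\delta=\min_{i,j\in[Z]}M^{(N_0)}_{i,j}>0$. Let $f:\mathbb{H}^N\times\mathbb{B}^N\to\mathbb{B}^N$ be fixed, and let the loss satisfy $|l(f,z)|\le B$ for all $z$, for some constant $B>0$. For a sample $S=(z_1,\dots,z_T)$ of the chain, define $err_S^T(f)=\frac1T\sum_{t=1}^T l(f,z_t)$ and $err_\pi(f)=E_{z\sim\pi}\,l(f,z)$. Then for every $\epsilon>0$ and every $T>2BN_0/(Z\delta\epsilon)$, $$P\big(|err_S^T(f)-err_\pi(f)|\ge\epsilon\big)\le 2\exp\!\left(-\frac{Z^2\delta^2\,(T\epsilon-2BN_0/(Z\delta))^2}{2TB^2N_0^2}\right).$$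
   Context: $\{z_t\}$ is the Markov chain $z_t=(h_t,b_t,b_{t+1})$. It is a time-homogeneous, irreducible, aperiodic Markov chain on a finite state space of $Z$ states, identified with $[Z]=\{1,\dots,Z\}$, with transition matrix $M$. Here $h_t\in\mathbb{H}^N$ (joint feedback) and $b_t\in\mathbb{B}^N$ (joint behavior), with $\mathbb{H},\mathbb{B}$ finite. For a prediction function $f:\mathbb{H}^N\times\mathbb{B}^N\to\mathbb{B}^N$ and a state $z=(h,b,b')$, the loss is $l(f,z)=\ell(f(h,b),b')$ for a fixed loss function $\ell$ on $\mathbb{B}^N\times\mathbb{B}^N$; an example is the 0-1 loss $\mathbf 1[f(h,b)\ne b']$. *)

theory Defs
  imports "HOL-Probability.Probability"
begin

text \<open>States z = (h, b, b') with h joint feedback in H^N, b, b' joint behaviour in B^N.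
  The chain lives on a finite state space S (of Z = card S states) of such triples,
  with transition matrix P (indexed by states).\<close>

type_synonym ('h, 'b, 'n) state = "('h ^ 'n) \<times> ('b ^ 'n) \<times> ('b ^ 'n)"

definition stochastic_matrix :: "'z set \<Rightarrow> ('z \<Rightarrow> 'z \<Rightarrow> real) \<Rightarrow> bool" where
  "stochastic_matrix S P \<longleftrightarrow> (\<forall>i\<in>S. \<forall>j\<in>S. P i j \<ge> 0) \<and> (\<forall>i\<in>S. (\<Sum>j\<in>S. P i j) = 1)"

fun mat_pow :: "'z set \<Rightarrow> ('z \<Rightarrow> 'z \<Rightarrow> real) \<Rightarrow> nat \<Rightarrow> 'z \<Rightarrow> 'z \<Rightarrow> real" where
  "mat_pow S P 0 i j = (if i = j then 1 else 0)"
| "mat_pow S P (Suc n) i j = (\<Sum>k\<in>S. mat_pow S P n i k * P k j)"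

definition irreducible_chain :: "'z set \<Rightarrow> ('z \<Rightarrow> 'z \<Rightarrow> real) \<Rightarrow> bool" where
  "irreducible_chain S P \<longleftrightarrow> (\<forall>i\<in>S. \<forall>j\<in>S. \<exists>n. mat_pow S P n i j > 0)"

definition aperiodic_chain :: "'z set \<Rightarrow> ('z \<Rightarrow> 'z \<Rightarrow> real) \<Rightarrow> bool" where
  "aperiodic_chain S P \<longleftrightarrow> (\<forall>i\<in>S. Gcd {n. n \<ge> 1 \<and> mat_pow S P n i i > 0} = 1)"

definition stationary_dist :: "'z set \<Rightarrow> ('z \<Rightarrow> 'z \<Rightarrow> real) \<Rightarrow> ('z \<Rightarrow> real) \<Rightarrow> bool" where
  "stationary_dist S P \<pi> \<longleftrightarrow> (\<forall>i\<in>S. \<pi> i \<ge> 0) \<and> (\<Sum>i\<in>S. \<pi> i) = 1 \<and>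
     (\<forall>j\<in>S. (\<Sum>i\<in>S. \<pi> i * P i j) = \<pi> j)"

text \<open>X_1, X_2, ... is a (time-homogeneous) Markov chain on S with transition matrix P,
  started in (hence stationary with) the distribution \<pi>: its finite-dimensional
  distributions are those of the chain.\<close>
definition stationary_markov_chain ::
  "'a measure \<Rightarrow> (nat \<Rightarrow> 'a \<Rightarrow> 'z) \<Rightarrow> 'z set \<Rightarrow> ('z \<Rightarrow> 'z \<Rightarrow> real) \<Rightarrow> ('z \<Rightarrow> real) \<Rightarrow> bool" where
  "stationary_markov_chain M X S P \<pi> \<longleftrightarrow>
     prob_space M \<and> (\<forall>t. X t \<in> measurable M (count_space UNIV)) \<and>
     (\<forall>n \<ge> 1. \<forall>s :: nat \<Rightarrow> 'z.
        measure M {\<omega> \<in> space M. \<forall>t\<in>{1..n}. X t \<omega> = s t} =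
        (if (\<forall>t\<in>{1..n}. s t \<in> S) then \<pi> (s 1) * (\<Prod>t\<in>{1..<n}. P (s t) (s (Suc t))) else 0))"

definition loss :: "('b ^ 'n \<Rightarrow> 'b ^ 'n \<Rightarrow> real) \<Rightarrow> ('h ^ 'n \<Rightarrow> 'b ^ 'n \<Rightarrow> 'b ^ 'n)
    \<Rightarrow> ('h, 'b, 'n) state \<Rightarrow> real" where
  "loss ell f z = (case z of (h, b, b') \<Rightarrow> ell (f h b) b')"

definition emp_err :: "('b ^ 'n \<Rightarrow> 'b ^ 'n \<Rightarrow> real) \<Rightarrow> ('h ^ 'n \<Rightarrow> 'b ^ 'n \<Rightarrow> 'b ^ 'n)
    \<Rightarrow> (nat \<Rightarrow> ('h, 'b, 'n) state) \<Rightarrow> nat \<Rightarrow> real" where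
  "emp_err ell f zs T = (1 / real T) * (\<Sum>t=1..T. loss ell f (zs t))"

definition pi_err :: "('b ^ 'n \<Rightarrow> 'b ^ 'n \<Rightarrow> real) \<Rightarrow> ('h ^ 'n \<Rightarrow> 'b ^ 'n \<Rightarrow> 'b ^ 'n)
    \<Rightarrow> ('h, 'b, 'n) state set \<Rightarrow> (('h, 'b, 'n) state \<Rightarrow> real) \<Rightarrow> real" where
  "pi_err ell f S \<pi> = (\<Sum>z\<in>S. \<pi> z * loss ell f z)"

end

theory Submission
  imports Defs
begin

definition opk :: "'z set \<Rightarrow> ('z\<Rightarrow>'z\<Rightarrow>real) \<Rightarrow> nat \<Rightarrow> ('z\<Rightarrow>real) \<Rightarrow> 'z \<Rightarrow> real" where
  "opk S P k g x = (\<Sum>y\<in>S. mat_pow S P k x y * g y)"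

definition osc_le :: "'z set \<Rightarrow> ('z\<Rightarrow>real) \<Rightarrow> real \<Rightarrow> bool" where
  "osc_le S f c \<longleftrightarrow> (\<forall>x\<in>S. \<forall>y\<in>S. f x - f y \<le> c)"

lemma stoch_pow:
  assumes "stochastic_matrix S P" and fin: "finite S"
  shows "stochastic_matrix S (mat_pow S P k)"
proof (induction k)
  case 0
  show ?case unfolding stochastic_matrix_def using fin by (auto simp: sum.delta)
next
  case (Suc k)
  have nn: "\<forall>i\<in>S. \<forall>j\<in>S. mat_pow S P k i j \<ge> 0" and rs: "\<forall>i\<in>S. (\<Sum>j\<in>S. mat_pow S P k i j) = 1"
    using Suc unfolding stochastic_matrix_def by auto
  have pn: "\<forall>i\<in>S. \<forall>j\<in>S. P i j \<ge> 0" and prs: "\<forall>i\<in>S. (\<Sum>j\<in>S. P i j) = 1"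
    using assms unfolding stochastic_matrix_def by auto
  show ?case unfolding stochastic_matrix_def
  proof (intro conjI ballI)
    fix i j assume "i \<in> S" "j \<in> S"
    then show "0 \<le> mat_pow S P (Suc k) i j" using nn pn by (auto intro!: sum_nonneg)
  next
    fix i assume i: "i \<in> S"
    have "(\<Sum>j\<in>S. mat_pow S P (Suc k) i j) = (\<Sum>j\<in>S. \<Sum>l\<in>S. mat_pow S P k i l * P l j)"
      by simp
    also have "\<dots> = (\<Sum>l\<in>S. \<Sum>j\<in>S. mat_pow S P k i l * P l j)"
      by (rule sum.swap)
    also have "\<dots> = (\<Sum>l\<in>S. mat_pow S P k i l * (\<Sum>j\<in>S. P l j))"
      by (simp add: sum_distrib_left)
    also have "\<dots> = 1" using prs rs i by simp
    finally show "(\<Sum>j\<in>S. mat_pow S P (Suc k) i j) = 1" .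
  qed
qed

lemma mat_pow_add:
  assumes "j \<in> S" and fin: "finite S"
  shows "mat_pow S P (a + b) i j = (\<Sum>l\<in>S. mat_pow S P a i l * mat_pow S P b l j)"
  using assms
proof (induction b arbitrary: j)
  case 0
  then show ?case using fin by (simp add: if_distrib sum.delta' cong: if_cong)
next
  case (Suc b)
  have "mat_pow S P (a + Suc b) i j = (\<Sum>k\<in>S. mat_pow S P (a+b) i k * P k j)" by simp
  also have "\<dots> = (\<Sum>k\<in>S. (\<Sum>l\<in>S. mat_pow S P a i l * mat_pow S P b l k) * P k j)"
    by (rule sum.cong[OF refl]) (simp add: Suc.IH fin)
  also have "\<dots> = (\<Sum>k\<in>S. \<Sum>l\<in>S. mat_pow S P a i l * (mat_pow S P b l k * P k j))"
    by (simp add: sum_distrib_right mult.assoc)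
  also have "\<dots> = (\<Sum>l\<in>S. \<Sum>k\<in>S. mat_pow S P a i l * (mat_pow S P b l k * P k j))"
    by (rule sum.swap)
  also have "\<dots> = (\<Sum>l\<in>S. mat_pow S P a i l * mat_pow S P (Suc b) l j)"
    by (simp add: sum_distrib_left)
  finally show ?case .
qed

lemma opk_add:
  assumes "x \<in> S" and fin: "finite S"
  shows "opk S P (a + b) g x = opk S P a (opk S P b g) x"
proof -
  have "opk S P (a + b) g x = (\<Sum>y\<in>S. (\<Sum>l\<in>S. mat_pow S P a x l * mat_pow S P b l y) * g y)"
    unfolding opk_def by (intro sum.cong) (auto simp: mat_pow_add fin)
  also have "\<dots> = (\<Sum>y\<in>S. \<Sum>l\<in>S. mat_pow S P a x l * (mat_pow S P b l y * g y))"
    by (simp add: sum_distrib_right mult.assoc)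
  also have "\<dots> = (\<Sum>l\<in>S. \<Sum>y\<in>S. mat_pow S P a x l * (mat_pow S P b l y * g y))"
    by (rule sum.swap)
  also have "\<dots> = opk S P a (opk S P b g) x"
    unfolding opk_def by (simp add: sum_distrib_left)
  finally show ?thesis .
qed

lemma opk_0: "finite S \<Longrightarrow> x \<in> S \<Longrightarrow> opk S P 0 g x = g x"
  unfolding opk_def
  by (subst sum.cong[OF refl, where h="\<lambda>y. if x = y then g y else 0"]) (auto simp: sum.delta)

lemma mat_pow_1: "finite S \<Longrightarrow> x \<in> S \<Longrightarrow> mat_pow S P 1 x y = P x y"
  by (simp, subst sum.cong[OF refl, where h="\<lambda>k. if x = k then P k y else 0"]) (auto simp: sum.delta)

lemma opk_1: "finite S \<Longrightarrow> x \<in> S \<Longrightarrow> opk S P 1 g x = (\<Sum>y\<in>S. P x y * g y)"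
  unfolding opk_def by (simp only: mat_pow_1)

lemma osc_le_cong: "osc_le S f c \<Longrightarrow> (\<And>x. x \<in> S \<Longrightarrow> f x = h x) \<Longrightarrow> osc_le S h c"
  unfolding osc_le_def by auto

lemma nonexp:
  assumes "stochastic_matrix S Q" and "osc_le S f w"
  shows "osc_le S (\<lambda>x. \<Sum>y\<in>S. Q x y * f y) w"
  unfolding osc_le_def
proof (intro ballI)
  fix x y assume x: "x \<in> S" and y: "y \<in> S"
  have qn: "\<forall>i\<in>S. \<forall>j\<in>S. Q i j \<ge> 0" and qs: "\<forall>i\<in>S. (\<Sum>j\<in>S. Q i j) = 1"
    using assms(1) unfolding stochastic_matrix_def by auto
  have "(\<Sum>j\<in>S. Q x j * f j) - (\<Sum>k\<in>S. Q y k * f k)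
      = (\<Sum>j\<in>S. \<Sum>k\<in>S. Q x j * Q y k * (f j - f k))"
  proof -
    have e1: "(\<Sum>j\<in>S. Q x j * f j) = (\<Sum>j\<in>S. \<Sum>k\<in>S. Q x j * Q y k * f j)"
    proof -
      have "(\<Sum>j\<in>S. \<Sum>k\<in>S. Q x j * Q y k * f j) = (\<Sum>j\<in>S. Q x j * f j * (\<Sum>k\<in>S. Q y k))"
        by (simp add: sum_distrib_left mult_ac)
      then show ?thesis using qs y by simp
    qed
    have e2: "(\<Sum>k\<in>S. Q y k * f k) = (\<Sum>j\<in>S. \<Sum>k\<in>S. Q x j * Q y k * f k)"
    proof -
      have "(\<Sum>j\<in>S. \<Sum>k\<in>S. Q x j * Q y k * f k) = (\<Sum>j\<in>S. Q x j * (\<Sum>k\<in>S. Q y k * f k))"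
        by (simp add: sum_distrib_left mult_ac)
      also have "\<dots> = (\<Sum>k\<in>S. Q y k * f k)" using qs x by (simp add: sum_distrib_right[symmetric])
      finally show ?thesis by simp
    qed
    show ?thesis by (simp add: e1 e2 sum_subtractf[symmetric] right_diff_distrib)
  qed
  also have "\<dots> \<le> (\<Sum>j\<in>S. \<Sum>k\<in>S. Q x j * Q y k * w)"
    using assms(2) qn x y unfolding osc_le_def
    by (intro sum_mono mult_left_mono) auto
  also have "\<dots> = (\<Sum>j\<in>S. Q x j * ((\<Sum>k\<in>S. Q y k) * w))"
    by (simp add: sum_distrib_left sum_distrib_right mult_ac)
  also have "\<dots> = w" using qs x y
    by (simp add: sum_distrib_right[symmetric])
  finally show "(\<Sum>j\<in>S. Q x j * f j) - (\<Sum>k\<in>S. Q y k * f k) \<le> w" .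
qed

lemma contract:
  assumes st: "stochastic_matrix S Q" and fin: "finite S"
    and lb: "\<forall>i\<in>S. \<forall>j\<in>S. Q i j \<ge> d"
    and osc: "osc_le S f w" and w0: "w \<ge> 0"
  shows "osc_le S (\<lambda>x. \<Sum>y\<in>S. Q x y * f y) ((1 - real (card S) * d) * w)"
  unfolding osc_le_def
proof (intro ballI)
  fix x y assume x: "x \<in> S" and y: "y \<in> S"
  define r where "r = 1 - real (card S) * d"
  define R where "R i j = Q i j - d" for i j
  have qs: "\<forall>i\<in>S. (\<Sum>j\<in>S. Q i j) = 1" using st unfolding stochastic_matrix_def by auto
  have Rn: "\<And>i j. i \<in> S \<Longrightarrow> j \<in> S \<Longrightarrow> R i j \<ge> 0" using lb unfolding R_def by auto
  have Rs: "\<And>i. i \<in> S \<Longrightarrow> (\<Sum>j\<in>S. R i j) = r"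
    using qs unfolding R_def r_def by (simp add: sum_subtractf)
  have r0: "r \<ge> 0" using Rs[OF x] Rn x by (metis sum_nonneg)
  have Qf: "\<And>i. i \<in> S \<Longrightarrow> (\<Sum>j\<in>S. Q i j * f j) = d * (\<Sum>j\<in>S. f j) + (\<Sum>j\<in>S. R i j * f j)"
    unfolding R_def by (simp add: algebra_simps sum.distrib sum_distrib_left sum_subtractf)
  define D where "D = (\<Sum>j\<in>S. R x j * f j) - (\<Sum>k\<in>S. R y k * f k)"
  have diff: "(\<Sum>j\<in>S. Q x j * f j) - (\<Sum>k\<in>S. Q y k * f k) = D"
    unfolding D_def using Qf[OF x] Qf[OF y] by simp
  have key: "r * D = (\<Sum>j\<in>S. \<Sum>k\<in>S. R x j * R y k * (f j - f k))"
  proof -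
    have e1: "r * (\<Sum>j\<in>S. R x j * f j) = (\<Sum>j\<in>S. \<Sum>k\<in>S. R x j * R y k * f j)"
    proof -
      have "(\<Sum>j\<in>S. \<Sum>k\<in>S. R x j * R y k * f j) = (\<Sum>j\<in>S. R x j * f j * (\<Sum>k\<in>S. R y k))"
        by (simp add: sum_distrib_left mult_ac)
      then show ?thesis using Rs[OF y] by (simp add: sum_distrib_left mult_ac)
    qed
    have e2: "r * (\<Sum>k\<in>S. R y k * f k) = (\<Sum>j\<in>S. \<Sum>k\<in>S. R x j * R y k * f k)"
    proof -
      have "(\<Sum>j\<in>S. \<Sum>k\<in>S. R x j * R y k * f k) = (\<Sum>j\<in>S. R x j * (\<Sum>k\<in>S. R y k * f k))"
        by (simp add: sum_distrib_left mult_ac)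
      also have "\<dots> = r * (\<Sum>k\<in>S. R y k * f k)" using Rs[OF x] by (simp add: sum_distrib_right[symmetric])
      finally show ?thesis by simp
    qed
    show ?thesis unfolding D_def right_diff_distrib e1 e2
      by (simp add: sum_subtractf[symmetric] right_diff_distrib)
  qed
  also have "\<dots> \<le> (\<Sum>j\<in>S. \<Sum>k\<in>S. R x j * R y k * w)"
    using osc Rn x y unfolding osc_le_def
    by (intro sum_mono mult_left_mono) auto
  also have "\<dots> = (\<Sum>j\<in>S. R x j * ((\<Sum>k\<in>S. R y k) * w))"
    by (simp add: sum_distrib_left sum_distrib_right mult_ac)
  also have "\<dots> = r * r * w" using Rs[OF x] Rs[OF y]
    by (simp add: sum_distrib_right[symmetric])
  finally have rD: "r * D \<le> r * (r * w)" by simp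
  have "D \<le> r * w"
  proof (cases "r = 0")
    case True
    then have "\<And>j. j \<in> S \<Longrightarrow> R x j = 0" "\<And>j. j \<in> S \<Longrightarrow> R y j = 0"
      using Rs[OF x] Rs[OF y] Rn x y fin sum_nonneg_eq_0_iff by metis+
    then have "D = 0" unfolding D_def by simp
    then show ?thesis using True by simp
  next
    case False
    then have "r > 0" using r0 by simp
    then show ?thesis using rD by simp
  qed
  then show "(\<Sum>j\<in>S. Q x j * f j) - (\<Sum>k\<in>S. Q y k * f k) \<le> (1 - real (card S) * d) * w"
    using diff unfolding r_def by simp
qed

lemma r_nonneg:
  assumes st: "stochastic_matrix S Q" and lb: "\<forall>i\<in>S. \<forall>j\<in>S. Q i j \<ge> d" and "S \<noteq> {}"
  shows "1 - real (card S) * d \<ge> 0"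
proof -
  obtain x where x: "x \<in> S" using assms(3) by auto
  have "(\<Sum>j\<in>S. Q x j - d) = 1 - real (card S) * d"
    using st x unfolding stochastic_matrix_def by (simp add: sum_subtractf)
  moreover have "(\<Sum>j\<in>S. Q x j - d) \<ge> 0" using lb x by (intro sum_nonneg) auto
  ultimately show ?thesis by simp
qed

lemma osc_opk:
  assumes st: "stochastic_matrix S P" and fin: "finite S" and N0: "N0 \<ge> 1"
    and lb: "\<forall>i\<in>S. \<forall>j\<in>S. mat_pow S P N0 i j \<ge> d"
    and osc: "osc_le S g w" and w0: "w \<ge> 0" and r0: "1 - real (card S) * d \<ge> 0"
  shows "osc_le S (opk S P k g) (w * (1 - real (card S) * d) ^ (k div N0))"
proof (induction k rule: less_induct)
  case (less k)
  define r where "r = 1 - real (card S) * d"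
  show ?case
  proof (cases "k < N0")
    case True
    then have "k div N0 = 0" by simp
    moreover have "osc_le S (opk S P k g) w"
      unfolding opk_def by (rule nonexp[OF stoch_pow[OF st fin] osc])
    ultimately show ?thesis by simp
  next
    case False
    then have kk: "k = N0 + (k - N0)" by simp
    have IH: "osc_le S (opk S P (k - N0) g) (w * r ^ ((k - N0) div N0))"
      using less.IH[of "k - N0"] False N0 unfolding r_def by simp
    have wr: "w * r ^ ((k - N0) div N0) \<ge> 0" using w0 r0 unfolding r_def by simp
    have "osc_le S (\<lambda>x. \<Sum>y\<in>S. mat_pow S P N0 x y * opk S P (k - N0) g y) (r * (w * r ^ ((k - N0) div N0)))"
      unfolding r_def by (rule contract[OF stoch_pow[OF st fin] fin lb IH[unfolded r_def] wr[unfolded r_def]])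
    moreover have "k div N0 = Suc ((k - N0) div N0)"
      using False N0 by (metis add_diff_inverse_nat div_add_self1 not_one_le_zero plus_1_eq_Suc add.commute le_numeral_extra(2) not_less)
    ultimately have "osc_le S (\<lambda>x. \<Sum>y\<in>S. mat_pow S P N0 x y * opk S P (k - N0) g y) (w * r ^ (k div N0))"
      by (simp add: mult_ac)
    then show ?thesis unfolding r_def
      by (rule osc_le_cong) (metis kk opk_add fin opk_def)
  qed
qed

definition Hf :: "'z set \<Rightarrow> ('z\<Rightarrow>'z\<Rightarrow>real) \<Rightarrow> ('z\<Rightarrow>real) \<Rightarrow> nat \<Rightarrow> 'z \<Rightarrow> real" where
  "Hf S P g n x = (\<Sum>k\<le>n. opk S P k g x)"

lemma Hf_0: "finite S \<Longrightarrow> x \<in> S \<Longrightarrow> Hf S P g 0 x = g x"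
  unfolding Hf_def by (simp add: opk_0)

lemma Hf_Suc:
  assumes fin: "finite S" and x: "x \<in> S"
  shows "Hf S P g (Suc n) x = g x + (\<Sum>y\<in>S. P x y * Hf S P g n y)"
proof -
  have "Hf S P g (Suc n) x = opk S P 0 g x + (\<Sum>k\<le>n. opk S P (Suc k) g x)"
    unfolding Hf_def sum.atMost_Suc_shift by simp
  also have "(\<Sum>k\<le>n. opk S P (Suc k) g x) = (\<Sum>k\<le>n. \<Sum>y\<in>S. P x y * opk S P k g y)"
  proof (rule sum.cong[OF refl])
    fix k
    have "opk S P (Suc k) g x = opk S P (1 + k) g x" by simp
    also have "\<dots> = opk S P 1 (opk S P k g) x" by (rule opk_add[OF x fin])
    also have "\<dots> = (\<Sum>y\<in>S. P x y * opk S P k g y)" by (rule opk_1[OF fin x])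
    finally show "opk S P (Suc k) g x = (\<Sum>y\<in>S. P x y * opk S P k g y)" .
  qed
  also have "\<dots> = (\<Sum>y\<in>S. \<Sum>k\<le>n. P x y * opk S P k g y)" by (rule sum.swap)
  also have "\<dots> = (\<Sum>y\<in>S. P x y * Hf S P g n y)" unfolding Hf_def by (simp add: sum_distrib_left)
  finally show ?thesis using opk_0[OF fin x] by simp
qed

lemma stat_opk:
  assumes sd: "stationary_dist S P \<pi>" and fin: "finite S"
  shows "(\<Sum>x\<in>S. \<pi> x * opk S P k g x) = (\<Sum>x\<in>S. \<pi> x * g x)"
proof (induction k arbitrary: g)
  case 0
  then show ?case by (intro sum.cong) (auto simp: opk_0[OF fin])
next
  case (Suc k)
  have "(\<Sum>x\<in>S. \<pi> x * opk S P (Suc k) g x) = (\<Sum>x\<in>S. \<pi> x * opk S P k (opk S P 1 g) x)"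
    using opk_add[OF _ fin, where a=k and b=1 and P=P and g=g] by (intro sum.cong) auto
  also have "\<dots> = (\<Sum>x\<in>S. \<pi> x * opk S P 1 g x)" by (rule Suc.IH)
  also have "\<dots> = (\<Sum>x\<in>S. \<Sum>y\<in>S. \<pi> x * P x y * g y)"
    by (intro sum.cong refl, subst opk_1[OF fin], assumption, simp add: sum_distrib_left mult_ac)
  also have "\<dots> = (\<Sum>y\<in>S. \<Sum>x\<in>S. \<pi> x * P x y * g y)" by (rule sum.swap)
  also have "\<dots> = (\<Sum>y\<in>S. (\<Sum>x\<in>S. \<pi> x * P x y) * g y)" by (simp add: sum_distrib_right)
  also have "\<dots> = (\<Sum>y\<in>S. \<pi> y * g y)" using sd unfolding stationary_dist_def by simp
  finally show ?case .
qed

lemma stat_Hf: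
  assumes sd: "stationary_dist S P \<pi>" and fin: "finite S" and g0: "(\<Sum>x\<in>S. \<pi> x * g x) = 0"
  shows "(\<Sum>x\<in>S. \<pi> x * Hf S P g n x) = 0"
proof -
  have "(\<Sum>x\<in>S. \<pi> x * Hf S P g n x) = (\<Sum>k\<le>n. \<Sum>x\<in>S. \<pi> x * opk S P k g x)"
    unfolding Hf_def by (simp add: sum_distrib_left sum.swap[of _ S])
  also have "\<dots> = 0" using stat_opk[OF sd fin] g0 by simp
  finally show ?thesis .
qed

lemma osc_sum:
  assumes "\<And>k. k \<in> K \<Longrightarrow> osc_le S (F k) (c k)"
  shows "osc_le S (\<lambda>x. \<Sum>k\<in>K. F k x) (\<Sum>k\<in>K. c k)"
  unfolding osc_le_def
proof (intro ballI)
  fix x y assume "x \<in> S" "y \<in> S"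
  then have "(\<Sum>k\<in>K. F k x) - (\<Sum>k\<in>K. F k y) = (\<Sum>k\<in>K. F k x - F k y)" by (simp add: sum_subtractf)
  also have "\<dots> \<le> (\<Sum>k\<in>K. c k)" using assms \<open>x\<in>S\<close> \<open>y\<in>S\<close> unfolding osc_le_def by (intro sum_mono) auto
  finally show "(\<Sum>k\<in>K. F k x) - (\<Sum>k\<in>K. F k y) \<le> (\<Sum>k\<in>K. c k)" .
qed

lemma geom_div:
  fixes r :: real
  assumes r0: "0 \<le> r" and r1: "r < 1" and N0: "N0 \<ge> 1"
  shows "(\<Sum>k\<le>n. r ^ (k div N0)) \<le> real N0 / (1 - r)"
proof -
  have "(\<Sum>k\<le>n. r ^ (k div N0)) \<le> (\<Sum>k<Suc n * N0. r ^ (k div N0))"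
  proof (rule sum_mono2)
    show "{..n} \<subseteq> {..<Suc n * N0}" using N0
      by (auto simp: less_Suc_eq_le) (metis le_trans less_Suc_eq_le mult_le_mono1 mult_1_right nat_mult_le_cancel_disj not_less order_refl Suc_le_eq mult_Suc order_le_less_trans le_add1)
  qed (use r0 in auto)
  also have "\<dots> = (\<Sum>m<Suc n. \<Sum>k\<in>{m * N0..<m * N0 + N0}. r ^ (k div N0))"
    by (rule sum.nat_group[symmetric])
  also have "\<dots> = (\<Sum>m<Suc n. real N0 * r ^ m)"
  proof (rule sum.cong[OF refl])
    fix m
    have "\<And>k. k \<in> {m * N0..<m * N0 + N0} \<Longrightarrow> k div N0 = m"
      using N0 by (auto intro!: div_nat_eqI simp: mult.commute)
    then have "(\<Sum>k\<in>{m * N0..<m * N0 + N0}. r ^ (k div N0)) = (\<Sum>k\<in>{m * N0..<m * N0 + N0}. r ^ m)"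
      by (intro sum.cong) auto
    then show "(\<Sum>k\<in>{m * N0..<m * N0 + N0}. r ^ (k div N0)) = real N0 * r ^ m" by simp
  qed
  also have "\<dots> = real N0 * (\<Sum>m<Suc n. r ^ m)"
    by (rule sum_distrib_left[symmetric])
  also have "\<dots> = real N0 * ((1 - r ^ Suc n) / (1 - r))"
    using r1 by (subst sum_gp_strict) simp
  also have "\<dots> \<le> real N0 * (1 / (1 - r))"
    using r0 r1 by (intro mult_left_mono divide_right_mono) auto
  finally show ?thesis by simp
qed

lemma hoeff_discrete:
  fixes p f :: "'z \<Rightarrow> real"
  assumes fin: "finite A" and pn: "\<forall>y\<in>A. p y \<ge> 0" and ps: "(\<Sum>y\<in>A. p y) = 1"
    and osc: "\<forall>y\<in>A. \<forall>z\<in>A. f y - f z \<le> c" and l: "l \<ge> 0"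
  shows "(\<Sum>y\<in>A. p y * exp (l * f y)) \<le> exp (l * (\<Sum>y\<in>A. p y * f y) + l\<^sup>2 * c\<^sup>2 / 8)"
proof -
  have Ane: "A \<noteq> {}" using ps by auto
  define a where "a = Min (f ` A)"
  define \<mu> where "\<mu> = (\<Sum>y\<in>A. p y * f y)"
  have fa: "\<And>y. y \<in> A \<Longrightarrow> a \<le> f y" unfolding a_def using fin by auto
  obtain y0 where y0: "y0 \<in> A" "f y0 = a" unfolding a_def using fin Ane
    by (metis (mono_tags, lifting) Min_in finite_imageI image_iff image_is_empty)
  have fb: "\<And>y. y \<in> A \<Longrightarrow> f y \<le> a + c" using osc y0 by force
  have c0: "c \<ge> 0" using osc y0 by force
  have "\<mu> \<ge> (\<Sum>y\<in>A. p y * a)" unfolding \<mu>_def using pn fa by (intro sum_mono mult_left_mono) auto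
  then have mua: "\<mu> \<ge> a" using ps by (simp add: sum_distrib_right[symmetric])
  have "\<mu> \<le> (\<Sum>y\<in>A. p y * (a + c))" unfolding \<mu>_def using pn fb by (intro sum_mono mult_left_mono) auto
  then have mub: "\<mu> \<le> a + c" using ps by (simp add: sum_distrib_right[symmetric])
  define a' where "a' = a - \<mu>"
  define b' where "b' = a + c - \<mu>"
  have a'0: "a' \<le> 0" and b'0: "b' \<ge> 0" using mua mub unfolding a'_def b'_def by auto
  have split: "(\<Sum>y\<in>A. p y * exp (l * f y)) = exp (l * \<mu>) * (\<Sum>y\<in>A. p y * exp (l * (f y - \<mu>)))"
    by (simp add: sum_distrib_left right_diff_distrib exp_diff mult_ac)
  have main: "(\<Sum>y\<in>A. p y * exp (l * (f y - \<mu>))) \<le> exp (l\<^sup>2 * c\<^sup>2 / 8)"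
  proof (cases "c = 0")
    case True
    then have "\<And>y. y \<in> A \<Longrightarrow> f y = a" using fa fb by force
    then have "\<mu> = a" unfolding \<mu>_def using ps by (simp add: sum_distrib_right[symmetric])
    then have "(\<Sum>y\<in>A. p y * exp (l * (f y - \<mu>))) = (\<Sum>y\<in>A. p y)"
      using \<open>\<And>y. y \<in> A \<Longrightarrow> f y = a\<close> by (intro sum.cong) auto
    then show ?thesis using ps True by simp
  next
    case False
    then have cpos: "c > 0" using c0 by simp
    have ba: "b' - a' = c" unfolding a'_def b'_def by simp
    have conv: "exp (l * F) \<le> (b' - F) / c * exp (l * a') + (F - a') / c * exp (l * b')"
      if F: "a' \<le> F" "F \<le> b'" for F
    proof -
      define t where "t = (F - a') / c"
      have t0: "t \<ge> 0" and t1: "t \<le> 1" using F cpos ba unfolding t_def by (auto simp: divide_simps)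
      have "exp (l * ((1 - t) *\<^sub>R a' + t *\<^sub>R b')) \<le> (1 - t) * exp (l * a') + t * exp (l * b')"
        using convex_onD[OF convex_on_exp[OF l] t0 t1] by simp
      moreover have "(1 - t) *\<^sub>R a' + t *\<^sub>R b' = F"
        using cpos ba unfolding t_def by (simp add: field_simps)
      moreover have "1 - t = (b' - F) / c" using cpos ba unfolding t_def by (simp add: field_simps)
      ultimately show ?thesis unfolding t_def by simp
    qed
    have "(\<Sum>y\<in>A. p y * exp (l * (f y - \<mu>))) \<le>
          (\<Sum>y\<in>A. p y * ((b' - (f y - \<mu>)) / c * exp (l * a') + ((f y - \<mu>) - a') / c * exp (l * b')))"
    proof (intro sum_mono mult_left_mono)
      fix y assume y: "y \<in> A"
      show "exp (l * (f y - \<mu>)) \<le> (b' - (f y - \<mu>)) / c * exp (l * a') + ((f y - \<mu>) - a') / c * exp (l * b')"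
        by (rule conv) (use fa[OF y] fb[OF y] in \<open>auto simp: a'_def b'_def\<close>)
      show "0 \<le> p y" using pn y by auto
    qed
    also have "\<dots> = (\<Sum>y\<in>A. p y * (b' - (f y - \<mu>)) * (exp (l * a') / c) + p y * ((f y - \<mu>) - a') * (exp (l * b') / c))"
      by (intro sum.cong) (auto simp: field_simps)
    also have "\<dots> = (\<Sum>y\<in>A. p y * (b' - (f y - \<mu>))) * (exp (l * a') / c) + (\<Sum>y\<in>A. p y * ((f y - \<mu>) - a')) * (exp (l * b') / c)"
      by (simp add: sum.distrib sum_distrib_right sum_divide_distrib)
    also have "(\<Sum>y\<in>A. p y * (b' - (f y - \<mu>))) = b'"
    proof -
      have "(\<Sum>y\<in>A. p y * (b' - (f y - \<mu>))) = (\<Sum>y\<in>A. p y * (b' + \<mu>) - p y * f y)"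
        by (intro sum.cong) (auto simp: algebra_simps)
      also have "\<dots> = (\<Sum>y\<in>A. p y) * (b' + \<mu>) - \<mu>"
        unfolding \<mu>_def by (simp add: sum_subtractf sum_distrib_right)
      finally show ?thesis using ps by simp
    qed
    also have "(\<Sum>y\<in>A. p y * ((f y - \<mu>) - a')) = - a'"
    proof -
      have "(\<Sum>y\<in>A. p y * ((f y - \<mu>) - a')) = (\<Sum>y\<in>A. p y * f y - p y * (\<mu> + a'))"
        by (intro sum.cong) (auto simp: algebra_simps)
      also have "\<dots> = \<mu> - (\<Sum>y\<in>A. p y) * (\<mu> + a')"
        unfolding \<mu>_def by (simp add: sum_subtractf sum_distrib_right)
      finally show ?thesis using ps by simp
    qed
    also have "b' * (exp (l * a') / c) + - a' * (exp (l * b') / c) = (b' * exp (l * a') - a' * exp (l * b')) / c"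
      using cpos by (simp add: field_simps)
    finally have s1: "(\<Sum>y\<in>A. p y * exp (l * (f y - \<mu>))) \<le> (b' * exp (l * a') - a' * exp (l * b')) / c" .
    define q where "q = - a' / c"
    define z where "z = l * c"
    have q0: "q \<ge> 0" unfolding q_def using a'0 cpos by (simp add: divide_nonpos_pos)
    have z0: "z \<ge> 0" unfolding z_def using l cpos by simp
    have la: "l * a' = - z * q" unfolding q_def z_def using cpos by simp
    have lb: "l * b' = - z * q + z" unfolding q_def z_def using cpos ba by (simp add: algebra_simps)
    have pos: "1 + q * (exp z - 1) > 0"
      using q0 z0 by (intro add_pos_nonneg mult_nonneg_nonneg) auto
    have "(b' * exp (l * a') - a' * exp (l * b')) / c = exp (- z * q) * (1 + q * (exp z - 1))"
    proof -
      have b'eq: "b' = c * (1 - q)" unfolding q_def using ba cpos by (simp add: field_simps)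
      have a'eq: "a' = - c * q" unfolding q_def using cpos by simp
      have "(b' * exp (l * a') - a' * exp (l * b')) / c = (b' * exp (- z * q) - a' * exp (- z * q + z)) / c"
        by (simp only: la lb)
      also have "\<dots> = (c * (1 - q) * exp (- z * q) - (- c * q) * (exp (- z * q) * exp z)) / c"
        by (simp only: b'eq a'eq exp_add)
      also have "\<dots> = exp (- z * q) * (1 + q * (exp z - 1))"
        using cpos by (simp add: field_simps)
      finally show ?thesis .
    qed
    also have "\<dots> = exp (- z * q + ln (1 + q * (exp z - 1)))"
      using pos by (simp add: exp_add exp_diff exp_minus field_simps)
    also have "\<dots> \<le> exp (z\<^sup>2 / 8)"
      using Hoeffdings_lemma_aux[OF z0 q0] by simp
    also have "z\<^sup>2 / 8 = l\<^sup>2 * c\<^sup>2 / 8" unfolding z_def by (simp add: power_mult_distrib)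
    finally show ?thesis using s1 by simp
  qed
  have "(\<Sum>y\<in>A. p y * exp (l * f y)) \<le> exp (l * \<mu>) * exp (l\<^sup>2 * c\<^sup>2 / 8)"
    unfolding split by (intro mult_left_mono main) auto
  then show ?thesis unfolding \<mu>_def by (simp add: exp_add)
qed

definition paths :: "'z set \<Rightarrow> nat \<Rightarrow> (nat \<Rightarrow> 'z) set" where
  "paths S n = PiE {1..n} (\<lambda>_. S)"

definition wt :: "'z set \<Rightarrow> ('z\<Rightarrow>'z\<Rightarrow>real) \<Rightarrow> ('z\<Rightarrow>real) \<Rightarrow> nat \<Rightarrow> (nat \<Rightarrow> 'z) \<Rightarrow> real" where
  "wt S P \<pi> n s = \<pi> (s 1) * (\<Prod>t\<in>{1..<n}. P (s t) (s (Suc t)))"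

lemma sum_paths_Suc:
  assumes fin: "finite S"
  shows "(\<Sum>s\<in>paths S (Suc n). F s) = (\<Sum>s\<in>paths S n. \<Sum>y\<in>S. F (s(Suc n := y)))"
proof -
  have eq: "paths S (Suc n) = (\<lambda>(y, g). g(Suc n := y)) ` (S \<times> paths S n)"
    unfolding paths_def by (simp add: atLeastAtMostSuc_conv PiE_insert_eq)
  have inj: "inj_on (\<lambda>(y, g). g(Suc n := y)) (S \<times> paths S n)"
    unfolding paths_def using inj_combinator[of "Suc n" "{1..n}" "\<lambda>_. S"] by simp
  have "(\<Sum>s\<in>paths S (Suc n). F s) = (\<Sum>(y, g)\<in>S \<times> paths S n. F (g(Suc n := y)))"
    unfolding eq by (subst sum.reindex[OF inj]) (simp add: case_prod_unfold)
  also have "\<dots> = (\<Sum>y\<in>S. \<Sum>g\<in>paths S n. F (g(Suc n := y)))"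
    by (rule sum.cartesian_product[symmetric])
  also have "\<dots> = (\<Sum>g\<in>paths S n. \<Sum>y\<in>S. F (g(Suc n := y)))"
    by (rule sum.swap)
  finally show ?thesis .
qed

lemma paths_0: "paths S 0 = {\<lambda>_. undefined}"
  unfolding paths_def by simp

lemma paths_mem: "s \<in> paths S n \<Longrightarrow> t \<in> {1..n} \<Longrightarrow> s t \<in> S"
  unfolding paths_def by auto

lemma wt_Suc:
  assumes "n \<ge> 1"
  shows "wt S P \<pi> (Suc n) (s(Suc n := y)) = wt S P \<pi> n s * P (s n) y"
proof -
  have "(\<Prod>t\<in>{1..<Suc n}. P ((s(Suc n := y)) t) ((s(Suc n := y)) (Suc t)))
        = (\<Prod>t\<in>{1..<n}. P ((s(Suc n := y)) t) ((s(Suc n := y)) (Suc t))) * P (s n) y"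
    using assms by (simp add: prod.atLeastLessThan_Suc)
  also have "(\<Prod>t\<in>{1..<n}. P ((s(Suc n := y)) t) ((s(Suc n := y)) (Suc t))) = (\<Prod>t\<in>{1..<n}. P (s t) (s (Suc t)))"
    by (intro prod.cong) auto
  finally show ?thesis unfolding wt_def using assms by simp
qed

lemma wt_nonneg:
  assumes "stochastic_matrix S P" "stationary_dist S P \<pi>" "s \<in> paths S n" "n \<ge> 1"
  shows "wt S P \<pi> n s \<ge> 0"
  unfolding wt_def using assms paths_mem[OF assms(3)] unfolding stochastic_matrix_def stationary_dist_def
  by (intro mult_nonneg_nonneg prod_nonneg) auto

lemma mgf_step:
  assumes fin: "finite S" and st: "stochastic_matrix S P" and sd: "stationary_dist S P \<pi>"
    and g0: "(\<Sum>x\<in>S. \<pi> x * g x) = 0"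
    and osc: "\<And>m. osc_le S (Hf S P g m) c" and l: "l \<ge> 0"
  shows "1 \<le> n \<Longrightarrow> n \<le> T \<Longrightarrow>
    (\<Sum>s\<in>paths S n. wt S P \<pi> n s * exp (l * ((\<Sum>t\<in>{1..<n}. g (s t)) + Hf S P g (T - n) (s n))))
      \<le> exp (real n * (l\<^sup>2 * c\<^sup>2 / 8))"
proof (induction n)
  case 0
  then show ?case by simp
next
  case (Suc n)
  have pn: "\<forall>y\<in>S. \<pi> y \<ge> 0" and ps: "(\<Sum>y\<in>S. \<pi> y) = 1" using sd unfolding stationary_dist_def by auto
  have Pn: "\<forall>i\<in>S. \<forall>j\<in>S. P i j \<ge> 0" and Ps: "\<forall>i\<in>S. (\<Sum>j\<in>S. P i j) = 1"
    using st unfolding stochastic_matrix_def by auto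
  have oscH: "\<forall>y\<in>S. \<forall>z\<in>S. Hf S P g m y - Hf S P g m z \<le> c" for m
    using osc[of m] unfolding osc_le_def by auto
  show ?case
  proof (cases "n = 0")
    case True
    have "(\<Sum>s\<in>paths S (Suc n). wt S P \<pi> (Suc n) s * exp (l * ((\<Sum>t\<in>{1..<Suc n}. g (s t)) + Hf S P g (T - Suc n) (s (Suc n)))))
        = (\<Sum>y\<in>S. \<pi> y * exp (l * Hf S P g (T - 1) y))"
      unfolding sum_paths_Suc[OF fin] True paths_0 by (simp add: wt_def)
    also have "\<dots> \<le> exp (l * (\<Sum>y\<in>S. \<pi> y * Hf S P g (T - 1) y) + l\<^sup>2 * c\<^sup>2 / 8)"
      by (rule hoeff_discrete[OF fin pn ps oscH l])
    also have "\<dots> = exp (real (Suc n) * (l\<^sup>2 * c\<^sup>2 / 8))"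
      using stat_Hf[OF sd fin g0] True by simp
    finally show ?thesis .
  next
    case False
    then have n1: "n \<ge> 1" by simp
    have nT: "n \<le> T" using Suc.prems by simp
    have TS: "T - n = Suc (T - Suc n)" using Suc.prems by simp
    have "(\<Sum>s\<in>paths S (Suc n). wt S P \<pi> (Suc n) s * exp (l * ((\<Sum>t\<in>{1..<Suc n}. g (s t)) + Hf S P g (T - Suc n) (s (Suc n)))))
        = (\<Sum>s\<in>paths S n. \<Sum>y\<in>S. wt S P \<pi> n s * P (s n) y * exp (l * ((\<Sum>t\<in>{1..<Suc n}. g (s t)) + Hf S P g (T - Suc n) y)))"
      unfolding sum_paths_Suc[OF fin]
    proof (intro sum.cong refl)
      fix s y
      have "(\<Sum>t\<in>{1..<Suc n}. g ((s(Suc n := y)) t)) = (\<Sum>t\<in>{1..<Suc n}. g (s t))"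
        by (intro sum.cong) auto
      then show "wt S P \<pi> (Suc n) (s(Suc n := y)) * exp (l * ((\<Sum>t\<in>{1..<Suc n}. g ((s(Suc n := y)) t)) + Hf S P g (T - Suc n) ((s(Suc n := y)) (Suc n))))
          = wt S P \<pi> n s * P (s n) y * exp (l * ((\<Sum>t\<in>{1..<Suc n}. g (s t)) + Hf S P g (T - Suc n) y))"
        using wt_Suc[OF n1] by simp
    qed
    also have "\<dots> \<le> (\<Sum>s\<in>paths S n. wt S P \<pi> n s * exp (l * ((\<Sum>t\<in>{1..<n}. g (s t)) + Hf S P g (T - n) (s n))) * exp (l\<^sup>2 * c\<^sup>2 / 8))"
    proof (rule sum_mono)
      fix s assume s: "s \<in> paths S n"
      have sn: "s n \<in> S" using paths_mem[OF s] n1 by simp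
      define A where "A = (\<Sum>t\<in>{1..<n}. g (s t))"
      have sumS: "(\<Sum>t\<in>{1..<Suc n}. g (s t)) = A + g (s n)"
        unfolding A_def using n1 by (simp add: sum.atLeastLessThan_Suc)
      have "(\<Sum>y\<in>S. wt S P \<pi> n s * P (s n) y * exp (l * ((\<Sum>t\<in>{1..<Suc n}. g (s t)) + Hf S P g (T - Suc n) y)))
          = wt S P \<pi> n s * exp (l * (A + g (s n))) * (\<Sum>y\<in>S. P (s n) y * exp (l * Hf S P g (T - Suc n) y))"
        unfolding sumS by (simp add: sum_distrib_left distrib_left exp_add mult_ac)
      also have "\<dots> \<le> wt S P \<pi> n s * exp (l * (A + g (s n))) * exp (l * (\<Sum>y\<in>S. P (s n) y * Hf S P g (T - Suc n) y) + l\<^sup>2 * c\<^sup>2 / 8)"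
        using Pn Ps sn wt_nonneg[OF st sd s n1]
        by (intro mult_left_mono hoeff_discrete[OF fin _ _ oscH l]) auto
      also have "\<dots> = wt S P \<pi> n s * exp (l * (A + Hf S P g (T - n) (s n))) * exp (l\<^sup>2 * c\<^sup>2 / 8)"
        unfolding TS Hf_Suc[OF fin sn] by (simp add: distrib_left exp_add mult_ac)
      finally show "(\<Sum>y\<in>S. wt S P \<pi> n s * P (s n) y * exp (l * ((\<Sum>t\<in>{1..<Suc n}. g (s t)) + Hf S P g (T - Suc n) y)))
          \<le> wt S P \<pi> n s * exp (l * ((\<Sum>t\<in>{1..<n}. g (s t)) + Hf S P g (T - n) (s n))) * exp (l\<^sup>2 * c\<^sup>2 / 8)"
        unfolding A_def .
    qed
    also have "\<dots> = (\<Sum>s\<in>paths S n. wt S P \<pi> n s * exp (l * ((\<Sum>t\<in>{1..<n}. g (s t)) + Hf S P g (T - n) (s n)))) * exp (l\<^sup>2 * c\<^sup>2 / 8)"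
      by (simp add: sum_distrib_right)
    also have "\<dots> \<le> exp (real n * (l\<^sup>2 * c\<^sup>2 / 8)) * exp (l\<^sup>2 * c\<^sup>2 / 8)"
      using Suc.IH n1 nT by (intro mult_right_mono) auto
    also have "\<dots> = exp (real (Suc n) * (l\<^sup>2 * c\<^sup>2 / 8))"
      by (simp add: exp_add[symmetric] algebra_simps)
    finally show ?thesis .
  qed
qed

lemma mgf:
  assumes fin: "finite S" and st: "stochastic_matrix S P" and sd: "stationary_dist S P \<pi>"
    and g0: "(\<Sum>x\<in>S. \<pi> x * g x) = 0"
    and osc: "\<And>m. osc_le S (Hf S P g m) c" and l: "l \<ge> 0" and T: "T \<ge> 1"
  shows "(\<Sum>s\<in>paths S T. wt S P \<pi> T s * exp (l * (\<Sum>t=1..T. g (s t)))) \<le> exp (real T * (l\<^sup>2 * c\<^sup>2 / 8))"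
proof -
  have "(\<Sum>s\<in>paths S T. wt S P \<pi> T s * exp (l * (\<Sum>t=1..T. g (s t))))
      = (\<Sum>s\<in>paths S T. wt S P \<pi> T s * exp (l * ((\<Sum>t\<in>{1..<T}. g (s t)) + Hf S P g (T - T) (s T))))"
  proof (intro sum.cong refl)
    fix s assume s: "s \<in> paths S T"
    have sT: "s T \<in> S" using paths_mem[OF s] T by simp
    have "(\<Sum>t=1..T. g (s t)) = (\<Sum>t\<in>{1..<Suc T}. g (s t))" by (simp add: atLeastLessThanSuc_atLeastAtMost)
    also have "\<dots> = (\<Sum>t\<in>{1..<T}. g (s t)) + g (s T)" using T by (simp add: sum.atLeastLessThan_Suc)
    finally show "wt S P \<pi> T s * exp (l * (\<Sum>t=1..T. g (s t))) = wt S P \<pi> T s * exp (l * ((\<Sum>t\<in>{1..<T}. g (s t)) + Hf S P g (T - T) (s T)))"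
      using Hf_0[OF fin sT] by simp
  qed
  also have "\<dots> \<le> exp (real T * (l\<^sup>2 * c\<^sup>2 / 8))"
    by (rule mgf_step[OF fin st sd g0 osc l]) (use T in auto)
  finally show ?thesis .
qed

lemma cyl:
  assumes smc: "stationary_markov_chain M X S P \<pi>" and T: "T \<ge> 1"
    and A: "A \<subseteq> PiE {1..T} (\<lambda>_. UNIV)" and finA: "finite A"
  shows "measure M {\<omega>\<in>space M. restrict (\<lambda>t. X t \<omega>) {1..T} \<in> A}
       = (\<Sum>s\<in>A. if (\<forall>t\<in>{1..T}. s t \<in> S) then \<pi> (s 1) * (\<Prod>t\<in>{1..<T}. P (s t) (s (Suc t))) else 0)"
proof -
  have ps: "prob_space M" and Xm: "\<And>t. X t \<in> measurable M (count_space UNIV)"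
    and fd: "\<And>n s. n \<ge> 1 \<Longrightarrow> measure M {\<omega> \<in> space M. \<forall>t\<in>{1..n}. X t \<omega> = s t} =
        (if (\<forall>t\<in>{1..n}. s t \<in> S) then \<pi> (s 1) * (\<Prod>t\<in>{1..<n}. P (s t) (s (Suc t))) else 0)"
    using smc unfolding stationary_markov_chain_def by auto
  interpret prob_space M by (rule ps)
  define C where "C s = {\<omega>\<in>space M. \<forall>t\<in>{1..T}. X t \<omega> = s t}" for s
  have ev: "{\<omega>\<in>space M. restrict (\<lambda>t. X t \<omega>) {1..T} \<in> A} = (\<Union>s\<in>A. C s)"
  proof (intro equalityI subsetI)
    fix \<omega> assume "\<omega> \<in> {\<omega>\<in>space M. restrict (\<lambda>t. X t \<omega>) {1..T} \<in> A}"
    then show "\<omega> \<in> (\<Union>s\<in>A. C s)" unfolding C_def by (intro UN_I[of "restrict (\<lambda>t. X t \<omega>) {1..T}"]) auto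
  next
    fix \<omega> assume "\<omega> \<in> (\<Union>s\<in>A. C s)"
    then obtain s where s: "s \<in> A" "\<omega> \<in> C s" by auto
    have "restrict (\<lambda>t. X t \<omega>) {1..T} = s"
      using s A unfolding C_def by (intro PiE_ext[of _ "{1..T}" "\<lambda>_. UNIV"]) auto
    then show "\<omega> \<in> {\<omega>\<in>space M. restrict (\<lambda>t. X t \<omega>) {1..T} \<in> A}" using s unfolding C_def by auto
  qed
  have meas: "C s \<in> sets M" for s
  proof -
    have "\<And>t. {\<omega>\<in>space M. X t \<omega> = s t} \<in> sets M"
    proof -
      fix t
      have "X t -` {s t} \<inter> space M \<in> sets M" using measurable_sets[OF Xm[of t], of "{s t}"] by simp
      moreover have "X t -` {s t} \<inter> space M = {\<omega>\<in>space M. X t \<omega> = s t}" by auto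
      ultimately show "{\<omega>\<in>space M. X t \<omega> = s t} \<in> sets M" by simp
    qed
    then show ?thesis unfolding C_def using T by (intro sets.sets_Collect_finite_All') auto
  qed
  have disj: "disjoint_family_on C A"
    unfolding disjoint_family_on_def
  proof (intro ballI impI)
    fix s s' assume s: "s \<in> A" and s': "s' \<in> A" and ne: "s \<noteq> s'"
    show "C s \<inter> C s' = {}"
    proof (rule ccontr)
      assume "C s \<inter> C s' \<noteq> {}"
      then obtain \<omega> where "\<omega> \<in> C s" "\<omega> \<in> C s'" by auto
      then have "s = s'" using s s' A unfolding C_def by (intro PiE_ext[of _ "{1..T}" "\<lambda>_. UNIV"]) auto
      then show False using ne by simp
    qed
  qed
  have "measure M {\<omega>\<in>space M. restrict (\<lambda>t. X t \<omega>) {1..T} \<in> A} = (\<Sum>s\<in>A. measure M (C s))"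
    unfolding ev using meas disj finA by (intro measure_finite_Union) auto
  also have "\<dots> = (\<Sum>s\<in>A. if (\<forall>t\<in>{1..T}. s t \<in> S) then \<pi> (s 1) * (\<Prod>t\<in>{1..<T}. P (s t) (s (Suc t))) else 0)"
    unfolding C_def using fd[OF T] by simp
  finally show ?thesis .
qed

lemma osc_le_mono: "osc_le S f c \<Longrightarrow> c \<le> c' \<Longrightarrow> osc_le S f c'"
  unfolding osc_le_def by force

lemma chernoff_paths:
  assumes fin: "finite S" and st: "stochastic_matrix S P" and sd: "stationary_dist S P \<pi>"
    and g0: "(\<Sum>x\<in>S. \<pi> x * g x) = 0"
    and osc: "\<And>m. osc_le S (Hf S P g m) c" and cpos: "c > 0" and T: "T \<ge> 1" and e: "\<epsilon> > 0"
  shows "(\<Sum>s\<in>{s\<in>paths S T. (\<Sum>t=1..T. g (s t)) \<ge> real T * \<epsilon>}. wt S P \<pi> T s)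
         \<le> exp (- 2 * real T * \<epsilon>\<^sup>2 / c\<^sup>2)"
proof -
  define l where "l = 4 * \<epsilon> / c\<^sup>2"
  have l0: "l \<ge> 0" unfolding l_def using e cpos by simp
  have finP: "finite (paths S T)" unfolding paths_def using fin by (simp add: finite_PiE)
  have "(\<Sum>s\<in>{s\<in>paths S T. (\<Sum>t=1..T. g (s t)) \<ge> real T * \<epsilon>}. wt S P \<pi> T s)
      \<le> (\<Sum>s\<in>{s\<in>paths S T. (\<Sum>t=1..T. g (s t)) \<ge> real T * \<epsilon>}. wt S P \<pi> T s * exp (l * ((\<Sum>t=1..T. g (s t)) - real T * \<epsilon>)))"
  proof (rule sum_mono)
    fix s assume s: "s \<in> {s\<in>paths S T. (\<Sum>t=1..T. g (s t)) \<ge> real T * \<epsilon>}"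
    have "1 \<le> exp (l * ((\<Sum>t=1..T. g (s t)) - real T * \<epsilon>))" using s l0 by simp
    then show "wt S P \<pi> T s \<le> wt S P \<pi> T s * exp (l * ((\<Sum>t=1..T. g (s t)) - real T * \<epsilon>))"
      using wt_nonneg[OF st sd _ T, of s] s by (simp add: mult_le_cancel_left1)
  qed
  also have "\<dots> \<le> (\<Sum>s\<in>paths S T. wt S P \<pi> T s * exp (l * ((\<Sum>t=1..T. g (s t)) - real T * \<epsilon>)))"
    using finP wt_nonneg[OF st sd _ T] by (intro sum_mono2) auto
  also have "\<dots> = exp (- (l * real T * \<epsilon>)) * (\<Sum>s\<in>paths S T. wt S P \<pi> T s * exp (l * (\<Sum>t=1..T. g (s t))))"
    by (simp add: sum_distrib_left right_diff_distrib exp_diff exp_minus field_simps)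
  also have "\<dots> \<le> exp (- (l * real T * \<epsilon>)) * exp (real T * (l\<^sup>2 * c\<^sup>2 / 8))"
    by (intro mult_left_mono mgf[OF fin st sd g0 osc l0 T]) auto
  also have "\<dots> = exp (- 2 * real T * \<epsilon>\<^sup>2 / c\<^sup>2)"
  proof -
    have "- (l * real T * \<epsilon>) + real T * (l\<^sup>2 * c\<^sup>2 / 8) = - 2 * real T * \<epsilon>\<^sup>2 / c\<^sup>2"
      unfolding l_def using cpos by (simp add: field_simps power2_eq_square)
    then show ?thesis by (simp add: exp_add[symmetric])
  qed
  finally show ?thesis .
qed

theorem theorem2:
  fixes M :: "'a measure"
    and X :: "nat \<Rightarrow> 'a \<Rightarrow> ('h::finite, 'b::finite, 'n::finite) state"
    and S :: "('h, 'b, 'n) state set"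
    and P :: "('h, 'b, 'n) state \<Rightarrow> ('h, 'b, 'n) state \<Rightarrow> real"
    and \<pi> :: "('h, 'b, 'n) state \<Rightarrow> real"
    and ell :: "'b ^ 'n \<Rightarrow> 'b ^ 'n \<Rightarrow> real"
    and f :: "'h ^ 'n \<Rightarrow> 'b ^ 'n \<Rightarrow> 'b ^ 'n"
    and N0 :: nat and B :: real
  assumes "S \<noteq> {}"
    and "stochastic_matrix S P"
    and "irreducible_chain S P"
    and "aperiodic_chain S P"
    and "stationary_dist S P \<pi>"
    and "stationary_markov_chain M X S P \<pi>"
    and "N0 \<ge> 1"
    and "\<forall>i\<in>S. \<forall>j\<in>S. mat_pow S P N0 i j > 0"
    and "B > 0"
    and "\<forall>z\<in>S. \<bar>loss ell f z\<bar> \<le> B"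
  shows "\<forall>\<epsilon>>0. \<forall>T::nat.
    (let Z = real (card S);
         \<delta> = Min {mat_pow S P N0 i j | i j. i \<in> S \<and> j \<in> S}
     in real T > 2 * B * real N0 / (Z * \<delta> * \<epsilon>) \<longrightarrow>
        measure M {\<omega> \<in> space M. \<bar>emp_err ell f (\<lambda>t. X t \<omega>) T - pi_err ell f S \<pi>\<bar> \<ge> \<epsilon>}
        \<le> 2 * exp (- (Z\<^sup>2 * \<delta>\<^sup>2 * (real T * \<epsilon> - 2 * B * real N0 / (Z * \<delta>))\<^sup>2)
                    / (2 * real T * B\<^sup>2 * (real N0)\<^sup>2)))"
proof (intro allI impI)
  fix \<epsilon> :: real and T :: nat
  assume e: "\<epsilon> > 0"
  note Sne = assms(1) and st = assms(2) and sd = assms(5) and smc = assms(6) and N0 = assms(7)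
    and pos = assms(8) and Bpos = assms(9) and lb = assms(10)
  define Z where "Z = real (card S)"
  define \<delta> where "\<delta> = Min {mat_pow S P N0 i j | i j. i \<in> S \<and> j \<in> S}"
  have fin: "finite S" by (rule finite_subset[OF subset_UNIV]) simp
  have Zpos: "Z > 0" unfolding Z_def using fin Sne by (simp add: card_gt_0_iff)
  define D where "D = {mat_pow S P N0 i j | i j. i \<in> S \<and> j \<in> S}"
  have D_eq: "D = (\<lambda>(i, j). mat_pow S P N0 i j) ` (S \<times> S)" unfolding D_def by (auto simp: image_def) blast+
  have finD: "finite D" unfolding D_eq using fin by simp
  have neD: "D \<noteq> {}" unfolding D_eq using Sne by simp
  have dpos: "\<delta> > 0"
  proof -
    have "\<delta> \<in> D" unfolding \<delta>_def D_def[symmetric] using finD neD by (rule Min_in)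
    then show ?thesis unfolding D_def using pos by auto
  qed
  have dlb: "\<forall>i\<in>S. \<forall>j\<in>S. mat_pow S P N0 i j \<ge> \<delta>"
  proof (intro ballI)
    fix i j assume "i \<in> S" "j \<in> S"
    then have "mat_pow S P N0 i j \<in> D" unfolding D_def by blast
    then show "\<delta> \<le> mat_pow S P N0 i j" unfolding \<delta>_def D_def[symmetric] by (rule Min_le[OF finD])
  qed
  define r where "r = 1 - Z * \<delta>"
  have r0: "r \<ge> 0" unfolding r_def Z_def by (rule r_nonneg[OF stoch_pow[OF st fin] dlb Sne])
  have r1: "r < 1" unfolding r_def using Zpos dpos by simp
  define c where "c = 2 * B * real N0 / (Z * \<delta>)"
  have cpos: "c > 0" unfolding c_def using Bpos N0 Zpos dpos by simp
  have oscH: "osc_le S (Hf S P h m) c" if h: "osc_le S h (2 * B)" for h m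
  proof -
    have "osc_le S (\<lambda>x. \<Sum>k\<le>m. opk S P k h x) (\<Sum>k\<le>m. 2 * B * r ^ (k div N0))"
      by (rule osc_sum, unfold r_def Z_def, rule osc_opk[OF st fin N0 dlb h]) (use Bpos r0 in \<open>auto simp: r_def Z_def\<close>)
    moreover have "(\<Sum>k\<le>m. 2 * B * r ^ (k div N0)) \<le> c"
    proof -
      have "(\<Sum>k\<le>m. 2 * B * r ^ (k div N0)) = 2 * B * (\<Sum>k\<le>m. r ^ (k div N0))"
        by (simp add: sum_distrib_left)
      also have "\<dots> \<le> 2 * B * (real N0 / (1 - r))"
        using geom_div[OF r0 r1 N0] Bpos by (intro mult_left_mono) auto
      also have "\<dots> = c" unfolding c_def r_def by simp
      finally show ?thesis .
    qed
    ultimately show ?thesis unfolding Hf_def by (rule osc_le_mono)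
  qed
  define err where "err = pi_err ell f S \<pi>"
  define g where "g z = loss ell f z - err" for z
  have pn: "\<forall>y\<in>S. \<pi> y \<ge> 0" and ps: "(\<Sum>y\<in>S. \<pi> y) = 1" using sd unfolding stationary_dist_def by auto
  have g0: "(\<Sum>x\<in>S. \<pi> x * g x) = 0"
    unfolding g_def err_def pi_err_def using ps
    by (simp add: right_diff_distrib sum_subtractf sum_distrib_right[symmetric])
  have g0': "(\<Sum>x\<in>S. \<pi> x * (- g x)) = 0" using g0 by (simp add: sum_negf)
  have oscg: "osc_le S g (2 * B)" unfolding osc_le_def g_def
  proof (intro ballI)
    fix x y assume "x \<in> S" "y \<in> S"
    then have "\<bar>loss ell f x\<bar> \<le> B" "\<bar>loss ell f y\<bar> \<le> B" using lb by blast+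
    then show "loss ell f x - err - (loss ell f y - err) \<le> 2 * B" by linarith
  qed
  have oscg': "osc_le S (\<lambda>x. - g x) (2 * B)" using oscg unfolding osc_le_def by force
  show "let Z = real (card S);
         \<delta> = Min {mat_pow S P N0 i j | i j. i \<in> S \<and> j \<in> S}
     in real T > 2 * B * real N0 / (Z * \<delta> * \<epsilon>) \<longrightarrow>
        measure M {\<omega> \<in> space M. \<bar>emp_err ell f (\<lambda>t. X t \<omega>) T - pi_err ell f S \<pi>\<bar> \<ge> \<epsilon>}
        \<le> 2 * exp (- (Z\<^sup>2 * \<delta>\<^sup>2 * (real T * \<epsilon> - 2 * B * real N0 / (Z * \<delta>))\<^sup>2)
                    / (2 * real T * B\<^sup>2 * (real N0)\<^sup>2))"
    unfolding Let_def Z_def[symmetric] \<delta>_def[symmetric] err_def[symmetric]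
  proof (intro impI)
    assume Tgt: "real T > 2 * B * real N0 / (Z * \<delta> * \<epsilon>)"
    have Tc: "real T * \<epsilon> > c"
    proof -
      have "2 * B * real N0 / (Z * \<delta> * \<epsilon>) = c / \<epsilon>" unfolding c_def by simp
      then show ?thesis using Tgt e by (simp add: divide_less_eq mult.commute)
    qed
    have T: "T \<ge> 1" using Tc cpos e by (cases T) auto
    define A where "A = {s \<in> PiE {1..T} (\<lambda>_. UNIV). \<bar>emp_err ell f s T - err\<bar> \<ge> \<epsilon>}"
    have finA: "finite A" unfolding A_def by (rule finite_subset[OF _ finite_PiE[of "{1..T}"]]) auto
    have emp_restr: "emp_err ell f (\<lambda>t. X t \<omega>) T = emp_err ell f (restrict (\<lambda>t. X t \<omega>) {1..T}) T" for \<omega>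
      unfolding emp_err_def by (intro arg_cong2[where f="(*)"] refl sum.cong) auto
    have "measure M {\<omega> \<in> space M. \<bar>emp_err ell f (\<lambda>t. X t \<omega>) T - err\<bar> \<ge> \<epsilon>}
        = measure M {\<omega>\<in>space M. restrict (\<lambda>t. X t \<omega>) {1..T} \<in> A}"
      unfolding A_def emp_restr by (intro arg_cong[where f="measure M"]) auto
    also have "\<dots> = (\<Sum>s\<in>A. if (\<forall>t\<in>{1..T}. s t \<in> S) then \<pi> (s 1) * (\<Prod>t\<in>{1..<T}. P (s t) (s (Suc t))) else 0)"
      by (rule cyl[OF smc T _ finA]) (auto simp: A_def)
    also have "\<dots> = (\<Sum>s\<in>A \<inter> paths S T. wt S P \<pi> T s)"
    proof -
      have "(\<Sum>s\<in>A. if (\<forall>t\<in>{1..T}. s t \<in> S) then \<pi> (s 1) * (\<Prod>t\<in>{1..<T}. P (s t) (s (Suc t))) else 0)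
          = (\<Sum>s\<in>A. if s \<in> paths S T then wt S P \<pi> T s else 0)"
        by (intro sum.cong refl) (auto simp: A_def paths_def wt_def)
      also have "\<dots> = (\<Sum>s\<in>A \<inter> paths S T. wt S P \<pi> T s)"
        using finA by (simp add: sum.inter_restrict)
      finally show ?thesis .
    qed
    also have "\<dots> \<le> (\<Sum>s\<in>{s\<in>paths S T. (\<Sum>t=1..T. g (s t)) \<ge> real T * \<epsilon>} \<union> {s\<in>paths S T. (\<Sum>t=1..T. - g (s t)) \<ge> real T * \<epsilon>}. wt S P \<pi> T s)"
    proof (rule sum_mono2)
      have finP: "finite (paths S T)" unfolding paths_def using fin by (simp add: finite_PiE)
      show "finite ({s\<in>paths S T. (\<Sum>t=1..T. g (s t)) \<ge> real T * \<epsilon>} \<union> {s\<in>paths S T. (\<Sum>t=1..T. - g (s t)) \<ge> real T * \<epsilon>})"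
        using finP by simp
      show "A \<inter> paths S T \<subseteq> {s\<in>paths S T. (\<Sum>t=1..T. g (s t)) \<ge> real T * \<epsilon>} \<union> {s\<in>paths S T. (\<Sum>t=1..T. - g (s t)) \<ge> real T * \<epsilon>}"
      proof
        fix s assume s: "s \<in> A \<inter> paths S T"
        have Tpos: "real T > 0" using T by simp
        have "emp_err ell f s T - err = (\<Sum>t=1..T. g (s t)) / real T"
          unfolding emp_err_def g_def using Tpos by (simp add: sum_subtractf field_simps)
        then have "\<bar>(\<Sum>t=1..T. g (s t))\<bar> / real T \<ge> \<epsilon>" using s unfolding A_def by simp
        then have "\<bar>(\<Sum>t=1..T. g (s t))\<bar> \<ge> real T * \<epsilon>" using Tpos by (simp add: le_divide_eq mult.commute)
        then show "s \<in> {s\<in>paths S T. (\<Sum>t=1..T. g (s t)) \<ge> real T * \<epsilon>} \<union> {s\<in>paths S T. (\<Sum>t=1..T. - g (s t)) \<ge> real T * \<epsilon>}"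
          using s by (auto simp: sum_negf abs_if split: if_splits)
      qed
    qed (use wt_nonneg[OF st sd _ T] in auto)
    also have "\<dots> \<le> (\<Sum>s\<in>{s\<in>paths S T. (\<Sum>t=1..T. g (s t)) \<ge> real T * \<epsilon>}. wt S P \<pi> T s)
                  + (\<Sum>s\<in>{s\<in>paths S T. (\<Sum>t=1..T. - g (s t)) \<ge> real T * \<epsilon>}. wt S P \<pi> T s)"
    proof -
      define U where "U = {s\<in>paths S T. (\<Sum>t=1..T. g (s t)) \<ge> real T * \<epsilon>}"
      define V where "V = {s\<in>paths S T. (\<Sum>t=1..T. - g (s t)) \<ge> real T * \<epsilon>}"
      have finP: "finite (paths S T)" unfolding paths_def using fin by (simp add: finite_PiE)
      have "(\<Sum>s\<in>U \<union> V. wt S P \<pi> T s) = (\<Sum>s\<in>U. wt S P \<pi> T s) + (\<Sum>s\<in>V. wt S P \<pi> T s) - (\<Sum>s\<in>U \<inter> V. wt S P \<pi> T s)"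
        by (rule sum_Un) (use finP in \<open>auto simp: U_def V_def\<close>)
      moreover have "(\<Sum>s\<in>U \<inter> V. wt S P \<pi> T s) \<ge> 0"
        using wt_nonneg[OF st sd _ T] by (intro sum_nonneg) (auto simp: U_def)
      ultimately show ?thesis unfolding U_def V_def by linarith
    qed
    also have "\<dots> \<le> exp (- 2 * real T * \<epsilon>\<^sup>2 / c\<^sup>2) + exp (- 2 * real T * \<epsilon>\<^sup>2 / c\<^sup>2)"
      by (intro add_mono chernoff_paths[OF fin st sd g0 oscH[OF oscg] cpos T e]
                 chernoff_paths[OF fin st sd g0' oscH[OF oscg'] cpos T e])
    also have "\<dots> \<le> 2 * exp (- (Z\<^sup>2 * \<delta>\<^sup>2 * (real T * \<epsilon> - 2 * B * real N0 / (Z * \<delta>))\<^sup>2)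
                    / (2 * real T * B\<^sup>2 * (real N0)\<^sup>2))"
    proof -
      have Tpos: "real T > 0" using T by simp
      have cc: "2 * B * real N0 / (Z * \<delta>) = c" unfolding c_def by simp
      have k: "Z\<^sup>2 * \<delta>\<^sup>2 / (2 * real T * B\<^sup>2 * (real N0)\<^sup>2) = 2 / (real T * c\<^sup>2)"
        unfolding c_def using Zpos dpos Bpos N0 Tpos by (simp add: field_simps power2_eq_square)
      have sq: "(real T * \<epsilon> - c)\<^sup>2 \<le> (real T * \<epsilon>)\<^sup>2"
        using Tc cpos by (intro power_mono) auto
      have "(Z\<^sup>2 * \<delta>\<^sup>2 * (real T * \<epsilon> - c)\<^sup>2) / (2 * real T * B\<^sup>2 * (real N0)\<^sup>2)
            = Z\<^sup>2 * \<delta>\<^sup>2 / (2 * real T * B\<^sup>2 * (real N0)\<^sup>2) * (real T * \<epsilon> - c)\<^sup>2"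
        by (simp only: times_divide_eq_left)
      also have "\<dots> = 2 * (real T * \<epsilon> - c)\<^sup>2 / (real T * c\<^sup>2)"
        unfolding k by simp
      also have "\<dots> \<le> 2 * (real T * \<epsilon>)\<^sup>2 / (real T * c\<^sup>2)"
        using sq Tpos cpos by (intro divide_right_mono mult_left_mono) auto
      also have "\<dots> = 2 * real T * \<epsilon>\<^sup>2 / c\<^sup>2"
        using Tpos by (simp add: field_simps power2_eq_square)
      finally have "- 2 * real T * \<epsilon>\<^sup>2 / c\<^sup>2 \<le> - ((Z\<^sup>2 * \<delta>\<^sup>2 * (real T * \<epsilon> - c)\<^sup>2) / (2 * real T * B\<^sup>2 * (real N0)\<^sup>2))"
        by simp
      then show ?thesis unfolding cc by simp
    qed
    finally show "measure M {\<omega> \<in> space M. \<bar>emp_err ell f (\<lambda>t. X t \<omega>) T - err\<bar> \<ge> \<epsilon>}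
        \<le> 2 * exp (- (Z\<^sup>2 * \<delta>\<^sup>2 * (real T * \<epsilon> - 2 * B * real N0 / (Z * \<delta>))\<^sup>2)
                    / (2 * real T * B\<^sup>2 * (real N0)\<^sup>2))" .
  qed
qed

end
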